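(* Let $R$ be a $*$-ring and $I$ an ideal of $R$ with $I^*\subseteq I$ and $I\subseteq J(R)$. Then $R$ is strongly $J$-$*$-clean if and only if (1) $R/I$ (with the induced involution $(a+I)^*=a^*+I$) is strongly $J$-$*$-clean; (2) $R$ is abelian; and (3) every idempotent lifts modulo $I$.
   Context: All rings are associative with identity. A $*$-ring is a ring $R$ with an involution $*$, i.e. a map $a\mapsto a^*$ with $(a+b)^*=a^*+b^*$, $(ab)^*=b^*a^*$, $(a^* )^*=a$. $J(R)$ denotes the Jacobson radical of $R$. A projection is an element $e$ with $e^2=e=e^*$. A $*$-ring $R$ is strongly $J$-$*$-clean if every $a\in R$ can be written $a=e+u$ with $e$ a projection, $u\in J(R)$ and $ae=ea$. A ring is abelian if all its idempotents are central. Idempotents lift modulo $I$ means: for every $x\in R$ with $x-x^2\in I$ there is an idempotent $f\in R$ with $x-f\in I$. *)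

theory Defs
  imports "HOL-Algebra.QuotRing"
begin

definition star_ring :: "('a, 'b) ring_scheme \<Rightarrow> ('a \<Rightarrow> 'a) \<Rightarrow> bool" where
  "star_ring R sigma \<longleftrightarrow> ring R \<and>
     (\<forall>a\<in>carrier R. sigma a \<in> carrier R) \<and>
     (\<forall>a\<in>carrier R. \<forall>b\<in>carrier R. sigma (a \<oplus>\<^bsub>R\<^esub> b) = sigma a \<oplus>\<^bsub>R\<^esub> sigma b) \<and>
     (\<forall>a\<in>carrier R. \<forall>b\<in>carrier R. sigma (a \<otimes>\<^bsub>R\<^esub> b) = sigma b \<otimes>\<^bsub>R\<^esub> sigma a) \<and>
     (\<forall>a\<in>carrier R. sigma (sigma a) = a)"

definition left_ideal :: "'a set \<Rightarrow> ('a, 'b) ring_scheme \<Rightarrow> bool" where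
  "left_ideal L R \<longleftrightarrow> additive_subgroup L R \<and>
     (\<forall>r\<in>carrier R. \<forall>x\<in>L. r \<otimes>\<^bsub>R\<^esub> x \<in> L)"

definition maximal_left_ideal :: "'a set \<Rightarrow> ('a, 'b) ring_scheme \<Rightarrow> bool" where
  "maximal_left_ideal M R \<longleftrightarrow> left_ideal M R \<and> M \<noteq> carrier R \<and>
     (\<forall>L. left_ideal L R \<longrightarrow> M \<subseteq> L \<longrightarrow> L = M \<or> L = carrier R)"

definition jacobson :: "('a, 'b) ring_scheme \<Rightarrow> 'a set" where
  "jacobson R = {a \<in> carrier R. \<forall>M. maximal_left_ideal M R \<longrightarrow> a \<in> M}"

definition projection :: "('a, 'b) ring_scheme \<Rightarrow> ('a \<Rightarrow> 'a) \<Rightarrow> 'a \<Rightarrow> bool" where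
  "projection R sigma e \<longleftrightarrow> e \<in> carrier R \<and> e \<otimes>\<^bsub>R\<^esub> e = e \<and> sigma e = e"

definition strongly_J_star_clean :: "('a, 'b) ring_scheme \<Rightarrow> ('a \<Rightarrow> 'a) \<Rightarrow> bool" where
  "strongly_J_star_clean R sigma \<longleftrightarrow>
     (\<forall>a\<in>carrier R. \<exists>e u. projection R sigma e \<and> u \<in> jacobson R \<and>
        a = e \<oplus>\<^bsub>R\<^esub> u \<and> a \<otimes>\<^bsub>R\<^esub> e = e \<otimes>\<^bsub>R\<^esub> a)"

definition abelian_ring :: "('a, 'b) ring_scheme \<Rightarrow> bool" where
  "abelian_ring R \<longleftrightarrow> (\<forall>e\<in>carrier R. e \<otimes>\<^bsub>R\<^esub> e = e \<longrightarrow>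
      (\<forall>x\<in>carrier R. e \<otimes>\<^bsub>R\<^esub> x = x \<otimes>\<^bsub>R\<^esub> e))"

definition idempotents_lift :: "('a, 'b) ring_scheme \<Rightarrow> 'a set \<Rightarrow> bool" where
  "idempotents_lift R I \<longleftrightarrow> (\<forall>x\<in>carrier R. x \<ominus>\<^bsub>R\<^esub> x \<otimes>\<^bsub>R\<^esub> x \<in> I \<longrightarrow>
      (\<exists>f\<in>carrier R. f \<otimes>\<^bsub>R\<^esub> f = f \<and> x \<ominus>\<^bsub>R\<^esub> f \<in> I))"

text \<open>Induced involution on R/I: (a + I)^* = a^* + I, computed from any representative.\<close>
definition quot_star :: "('a, 'b) ring_scheme \<Rightarrow> 'a set \<Rightarrow> ('a \<Rightarrow> 'a) \<Rightarrow> 'a set \<Rightarrow> 'a set" where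
  "quot_star R I sigma X = I +>\<^bsub>R\<^esub> sigma (SOME x. x \<in> X)"

end

theory Submission
  imports Defs
begin


lemma (in ring) left_idealI:
  assumes "L \<subseteq> carrier R" "\<zero> \<in> L" "\<And>a b. a \<in> L \<Longrightarrow> b \<in> L \<Longrightarrow> a \<oplus> b \<in> L"
    "\<And>r a. r \<in> carrier R \<Longrightarrow> a \<in> L \<Longrightarrow> r \<otimes> a \<in> L"
  shows "left_ideal L R"
proof -
  have neg: "\<ominus> a \<in> L" if "a \<in> L" for a
  proof -
    have "(\<ominus> \<one>) \<otimes> a \<in> L" using assms(4) that by simp
    thus ?thesis using that assms(1) by (simp add: l_minus subsetD)
  qed
  have "additive_subgroup L R"
    unfolding additive_subgroup_def
    apply (rule subgroup.intro)
    using assms neg by (auto simp: a_inv_def[symmetric])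
  thus ?thesis using assms unfolding left_ideal_def by blast
qed

lemma (in ring) left_idealD:
  assumes "left_ideal L R"
  shows "L \<subseteq> carrier R" "\<zero> \<in> L" "\<And>a b. a \<in> L \<Longrightarrow> b \<in> L \<Longrightarrow> a \<oplus> b \<in> L"
    "\<And>a. a \<in> L \<Longrightarrow> \<ominus> a \<in> L"
    "\<And>r a. r \<in> carrier R \<Longrightarrow> a \<in> L \<Longrightarrow> r \<otimes> a \<in> L"
  using assms unfolding left_ideal_def
  by (auto dest: additive_subgroup.a_subset additive_subgroup.zero_closed
        additive_subgroup.a_closed additive_subgroup.a_inv_closed)

lemma (in ring) jac_sub: "jacobson R \<subseteq> carrier R"
  unfolding jacobson_def by auto

lemma (in ring) jac_lmult: "r \<in> carrier R \<Longrightarrow> x \<in> jacobson R \<Longrightarrow> r \<otimes> x \<in> jacobson R"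
  unfolding jacobson_def maximal_left_ideal_def using left_idealD(5) by auto

lemma (in ring) jac_add: "x \<in> jacobson R \<Longrightarrow> y \<in> jacobson R \<Longrightarrow> x \<oplus> y \<in> jacobson R"
  unfolding jacobson_def maximal_left_ideal_def using left_idealD(3) by auto

lemma (in ring) jac_neg: "x \<in> jacobson R \<Longrightarrow> \<ominus> x \<in> jacobson R"
  unfolding jacobson_def maximal_left_ideal_def using left_idealD(4) by auto

lemma (in ring) one_in_left_ideal:
  assumes "left_ideal L R" "\<one> \<in> L" shows "L = carrier R"
proof
  show "L \<subseteq> carrier R" using left_idealD(1)[OF assms(1)] .
  show "carrier R \<subseteq> L"
  proof
    fix c assume c: "c \<in> carrier R"
    have "c \<otimes> \<one> \<in> L" using left_idealD(5)[OF assms(1) c assms(2)] .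
    thus "c \<in> L" using c by simp
  qed
qed



lemma (in ring) left_inv_of_J:
  assumes x: "x \<in> jacobson R" and r: "r \<in> carrier R"
  shows "\<exists>w\<in>carrier R. w \<otimes> (\<one> \<ominus> r \<otimes> x) = \<one>"
proof (rule ccontr)
  assume nw: "\<not> ?thesis"
  have xc: "x \<in> carrier R" using x jac_sub by blast
  define y where "y = \<one> \<ominus> r \<otimes> x"
  have yc: "y \<in> carrier R" unfolding y_def using xc r by simp
  define L0 where "L0 = {s \<otimes> y | s. s \<in> carrier R}"
  define A where "A = {L. left_ideal L R \<and> L0 \<subseteq> L \<and> \<one> \<notin> L}"
  have L0: "left_ideal L0 R"
  proof (rule left_idealI)
    show "L0 \<subseteq> carrier R" unfolding L0_def using yc by auto
    show "\<zero> \<in> L0" unfolding L0_def using yc by (auto intro!: exI[of _ \<zero>])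
    show "a \<oplus> b \<in> L0" if "a \<in> L0" "b \<in> L0" for a b
    proof -
      obtain s t where "s \<in> carrier R" "t \<in> carrier R" "a = s \<otimes> y" "b = t \<otimes> y"
        using \<open>a \<in> L0\<close> \<open>b \<in> L0\<close> unfolding L0_def by blast
      hence "a \<oplus> b = (s \<oplus> t) \<otimes> y \<and> s \<oplus> t \<in> carrier R" using yc by (simp add: l_distr)
      thus ?thesis unfolding L0_def by blast
    qed
    show "s \<otimes> a \<in> L0" if sa: "s \<in> carrier R" "a \<in> L0" for s a
    proof -
      obtain t where "t \<in> carrier R" "a = t \<otimes> y"
        using sa unfolding L0_def by blast
      hence "s \<otimes> a = (s \<otimes> t) \<otimes> y \<and> s \<otimes> t \<in> carrier R" using yc sa by (simp add: m_assoc)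
      thus ?thesis unfolding L0_def by blast
    qed
  qed
  have "L0 \<in> A" unfolding A_def using L0 nw unfolding L0_def y_def by auto
  hence "A \<noteq> {}" by blast
  have "\<exists>M\<in>A. \<forall>X\<in>A. M \<subseteq> X \<longrightarrow> X = M"
  proof (rule subset_Zorn_nonempty[OF \<open>A \<noteq> {}\<close>])
    fix C assume C: "C \<noteq> {}" "subset.chain A C"
    hence CA: "C \<subseteq> A" and ch: "\<forall>X\<in>C. \<forall>Y\<in>C. X \<subseteq> Y \<or> Y \<subseteq> X"
      unfolding pred_on.chain_def by auto
    obtain L1 where L1: "L1 \<in> C" using C by blast
    have li: "left_ideal X R" if "X \<in> C" for X using that CA unfolding A_def by auto
    have "left_ideal (\<Union>C) R"
    proof (rule left_idealI)
      show "\<Union>C \<subseteq> carrier R" using li left_idealD(1) by blast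
      show "\<zero> \<in> \<Union>C" using li left_idealD(2) L1 by blast
      show "a \<oplus> b \<in> \<Union>C" if ab: "a \<in> \<Union>C" "b \<in> \<Union>C" for a b
      proof -
        obtain X Y where XY: "X \<in> C" "Y \<in> C" "a \<in> X" "b \<in> Y" using ab by blast
        show ?thesis
        proof (cases "X \<subseteq> Y")
          case True thus ?thesis using XY li left_idealD(3) by blast
        next
          case False hence "Y \<subseteq> X" using ch XY by blast
          thus ?thesis using XY li left_idealD(3) by blast
        qed
      qed
      show "s \<otimes> a \<in> \<Union>C" if "s \<in> carrier R" "a \<in> \<Union>C" for s a
        using that li left_idealD(5) by blast
    qed
    moreover have "L0 \<subseteq> \<Union>C" using L1 CA unfolding A_def by blast
    moreover have "\<one> \<notin> \<Union>C" using CA unfolding A_def by blast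
    ultimately show "\<Union>C \<in> A" unfolding A_def by blast
  qed
  then obtain M where M: "M \<in> A" and Mmax: "\<forall>X\<in>A. M \<subseteq> X \<longrightarrow> X = M" by blast
  have Mli: "left_ideal M R" and L0M: "L0 \<subseteq> M" and oneM: "\<one> \<notin> M" using M unfolding A_def by auto
  have "maximal_left_ideal M R"
    unfolding maximal_left_ideal_def
  proof (intro conjI allI impI)
    show "left_ideal M R" by fact
    show "M \<noteq> carrier R" using oneM by auto
    fix L assume L: "left_ideal L R" "M \<subseteq> L"
    show "L = M \<or> L = carrier R"
    proof (cases "\<one> \<in> L")
      case True thus ?thesis using one_in_left_ideal L by blast
    next
      case False hence "L \<in> A" using L L0M unfolding A_def by blast
      thus ?thesis using Mmax L by blast
    qed
  qed
  hence "x \<in> M" using x unfolding jacobson_def by blast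
  hence rx: "r \<otimes> x \<in> M" using left_idealD(5)[OF Mli r] by blast
  have "\<one> \<otimes> y \<in> L0" unfolding L0_def by blast
  hence "y \<in> M" using L0M yc by auto
  hence "y \<oplus> r \<otimes> x \<in> M" using rx left_idealD(3)[OF Mli] by blast
  moreover have "y \<oplus> r \<otimes> x = \<one>" unfolding y_def using xc r
    by (simp add: minus_eq a_assoc l_neg)
  ultimately show False using oneM by simp
qed

lemma (in ring) J_of_left_inv:
  assumes xc: "x \<in> carrier R"
    and h: "\<And>r. r \<in> carrier R \<Longrightarrow> \<exists>w\<in>carrier R. w \<otimes> (\<one> \<ominus> r \<otimes> x) = \<one>"
  shows "x \<in> jacobson R"
  unfolding jacobson_def
proof (intro CollectI conjI allI impI)
  show "x \<in> carrier R" by fact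
  fix M assume M: "maximal_left_ideal M R"
  hence Mli: "left_ideal M R" and Mne: "M \<noteq> carrier R"
    and Mmax: "\<And>L. left_ideal L R \<Longrightarrow> M \<subseteq> L \<Longrightarrow> L = M \<or> L = carrier R"
    unfolding maximal_left_ideal_def by auto
  have Mc: "M \<subseteq> carrier R" using left_idealD(1)[OF Mli] .
  show "x \<in> M"
  proof (rule ccontr)
    assume xM: "x \<notin> M"
    define L where "L = {m \<oplus> s \<otimes> x | m s. m \<in> M \<and> s \<in> carrier R}"
    have "left_ideal L R"
    proof (rule left_idealI)
      show "L \<subseteq> carrier R" unfolding L_def using Mc xc by auto
      show "\<zero> \<in> L" unfolding L_def using xc left_idealD(2)[OF Mli]
        by (auto intro!: exI[of _ \<zero>])
      show "a \<oplus> b \<in> L" if ab: "a \<in> L" "b \<in> L" for a b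
      proof -
        obtain m s m' s' where "m \<in> M" "s \<in> carrier R" "m' \<in> M" "s' \<in> carrier R"
          "a = m \<oplus> s \<otimes> x" "b = m' \<oplus> s' \<otimes> x" using ab unfolding L_def by blast
        moreover have "m \<oplus> s \<otimes> x \<oplus> (m' \<oplus> s' \<otimes> x) = (m \<oplus> m') \<oplus> (s \<oplus> s') \<otimes> x"
          using calculation Mc xc by (simp add: l_distr a_ac subsetD)
        ultimately show ?thesis unfolding L_def using left_idealD(3)[OF Mli] by blast
      qed
      show "s \<otimes> a \<in> L" if sa: "s \<in> carrier R" "a \<in> L" for s a
      proof -
        obtain m t where "m \<in> M" "t \<in> carrier R" "a = m \<oplus> t \<otimes> x"
          using sa unfolding L_def by blast
        moreover have "s \<otimes> (m \<oplus> t \<otimes> x) = s \<otimes> m \<oplus> (s \<otimes> t) \<otimes> x"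
          using calculation sa Mc xc by (simp add: r_distr m_assoc subsetD)
        ultimately show ?thesis unfolding L_def using left_idealD(5)[OF Mli] sa by blast
      qed
    qed
    moreover have "M \<subseteq> L"
    proof
      fix m assume "m \<in> M"
      moreover have "m = m \<oplus> \<zero> \<otimes> x" using calculation Mc xc by auto
      ultimately show "m \<in> L" unfolding L_def by blast
    qed
    moreover have "x \<in> L"
    proof -
      have "x = \<zero> \<oplus> \<one> \<otimes> x" using xc by simp
      thus ?thesis unfolding L_def using left_idealD(2)[OF Mli] by blast
    qed
    ultimately have "L = carrier R" using Mmax xM by blast
    hence "\<one> \<in> L" by simp
    then obtain m s where ms: "m \<in> M" "s \<in> carrier R" "\<one> = m \<oplus> s \<otimes> x"
      unfolding L_def by blast
    have mc: "m \<in> carrier R" using ms Mc by blast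
    have "\<one> \<ominus> s \<otimes> x = m" using ms mc xc
      by (simp add: minus_eq a_assoc r_neg)
    moreover obtain w where w: "w \<in> carrier R" "w \<otimes> (\<one> \<ominus> s \<otimes> x) = \<one>" using h ms(2) by blast
    ultimately have e1: "\<one> = w \<otimes> m" by simp
    have "w \<otimes> m \<in> M" using left_idealD(5)[OF Mli w(1) ms(1)] .
    hence "\<one> \<in> M" using e1 by simp
    thus False using one_in_left_ideal Mli Mne by blast
  qed
qed



lemma (in ring) diff_eq_iff:
  assumes "a \<in> carrier R" "b \<in> carrier R" "c \<in> carrier R"
  shows "(a \<ominus> b = c) = (a = c \<oplus> b)"
proof
  assume "a \<ominus> b = c"
  hence "c \<oplus> b = (a \<ominus> b) \<oplus> b" by simp
  also have "\<dots> = a" using assms by (simp add: minus_eq a_assoc l_neg)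
  finally show "a = c \<oplus> b" by simp
next
  assume "a = c \<oplus> b"
  thus "a \<ominus> b = c" using assms by (simp add: minus_eq a_assoc r_neg)
qed

lemma (in ring) eq_iff_diff0:
  assumes "a \<in> carrier R" "b \<in> carrier R"
  shows "(a = b) = (a \<ominus> b = \<zero>)"
  using diff_eq_iff[OF assms zero_closed] assms by auto

lemma (in ring) r_distr_minus:
  assumes "a \<in> carrier R" "b \<in> carrier R" "c \<in> carrier R"
  shows "a \<otimes> (b \<ominus> c) = a \<otimes> b \<ominus> a \<otimes> c"
  using assms by (simp add: minus_eq r_distr r_minus)

lemma (in ring) l_distr_minus:
  assumes "a \<in> carrier R" "b \<in> carrier R" "c \<in> carrier R"
  shows "(b \<ominus> c) \<otimes> a = b \<otimes> a \<ominus> c \<otimes> a"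
  using assms by (simp add: minus_eq l_distr l_minus)

lemma (in ring) unit_of_J:
  assumes j: "j \<in> jacobson R"
  shows "\<exists>w\<in>carrier R. w \<otimes> (\<one> \<ominus> j) = \<one> \<and> (\<one> \<ominus> j) \<otimes> w = \<one>"
proof -
  have jc: "j \<in> carrier R" using j jac_sub by blast
  obtain w where w: "w \<in> carrier R" "w \<otimes> (\<one> \<ominus> \<one> \<otimes> j) = \<one>"
    using left_inv_of_J[OF j one_closed] by blast
  hence w1: "w \<otimes> (\<one> \<ominus> j) = \<one>" using jc by simp
  hence "w \<ominus> w \<otimes> j = \<one>" using w jc by (simp add: r_distr_minus)
  hence weq: "w = \<one> \<oplus> w \<otimes> j" using w jc diff_eq_iff by simp
  have k: "\<ominus> (w \<otimes> j) \<in> jacobson R" using jac_neg jac_lmult w j by blast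
  obtain v where v: "v \<in> carrier R" "v \<otimes> (\<one> \<ominus> \<one> \<otimes> (\<ominus> (w \<otimes> j))) = \<one>"
    using left_inv_of_J[OF k one_closed] by blast
  have "\<one> \<ominus> \<one> \<otimes> (\<ominus> (w \<otimes> j)) = w" using weq w jc
    by (simp add: minus_eq minus_minus)
  hence vw: "v \<otimes> w = \<one>" using v by simp
  have "v = v \<otimes> (w \<otimes> (\<one> \<ominus> j))" using w1 v by simp
  also have "\<dots> = (v \<otimes> w) \<otimes> (\<one> \<ominus> j)" using v w jc by (simp add: m_assoc)
  also have "\<dots> = \<one> \<ominus> j" using vw jc by simp
  finally have "(\<one> \<ominus> j) \<otimes> w = \<one>" using vw by simp
  thus ?thesis using w w1 by blast
qed

lemma (in ring) idem_J_zero: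
  assumes g: "g \<in> jacobson R" and gg: "g \<otimes> g = g"
  shows "g = \<zero>"
proof -
  have gc: "g \<in> carrier R" using g jac_sub by blast
  obtain w where w: "w \<in> carrier R" "w \<otimes> (\<one> \<ominus> g) = \<one>" using unit_of_J[OF g] by blast
  have "(\<one> \<ominus> g) \<otimes> g = g \<ominus> g" using gc gg by (simp add: l_distr_minus)
  hence "(\<one> \<ominus> g) \<otimes> g = \<zero>" using gc by (simp add: r_neg minus_eq)
  have "g = (w \<otimes> (\<one> \<ominus> g)) \<otimes> g" by (simp only: w(2) l_one[OF gc])
  also have "\<dots> = w \<otimes> ((\<one> \<ominus> g) \<otimes> g)" using w(1) gc by (simp add: m_assoc)
  also have "\<dots> = \<zero>" using \<open>(\<one> \<ominus> g) \<otimes> g = \<zero>\<close> w by simp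
  finally show ?thesis .
qed

lemma (in ring) comm_idem_J_aux:
  assumes e: "e \<in> carrier R" "e \<otimes> e = e" and f: "f \<in> carrier R" "f \<otimes> f = f"
    and com: "e \<otimes> f = f \<otimes> e" and d: "e \<ominus> f \<in> jacobson R"
  shows "e = e \<otimes> f"
proof -
  define q where "q = \<one> \<ominus> f"
  have qc: "q \<in> carrier R" unfolding q_def using f by simp
  have "q \<otimes> q = (\<one> \<ominus> f) \<ominus> (f \<ominus> f)" unfolding q_def using f
    by (simp add: l_distr_minus r_distr_minus)
  hence qq: "q \<otimes> q = q" unfolding q_def using f
    by (simp add: minus_eq r_neg)
  have eq: "e \<otimes> q = q \<otimes> e" unfolding q_def using e f com
    by (simp add: l_distr_minus r_distr_minus)
  have g: "e \<otimes> q = e \<otimes> (e \<ominus> f)" unfolding q_def using e f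
    by (simp add: r_distr_minus)
  hence gJ: "e \<otimes> q \<in> jacobson R" using jac_lmult[OF e(1) d] by simp
  have "(e \<otimes> q) \<otimes> (e \<otimes> q) = e \<otimes> (q \<otimes> e) \<otimes> q" using e qc by (simp add: m_assoc)
  also have "\<dots> = (e \<otimes> e) \<otimes> (q \<otimes> q)" using e qc eq[symmetric] by (metis m_assoc m_closed)
  also have "\<dots> = e \<otimes> q" using e qq by simp
  finally have "e \<otimes> q = \<zero>" using idem_J_zero gJ by blast
  hence "e \<ominus> e \<otimes> f = \<zero>" unfolding q_def using e f by (simp add: r_distr_minus)
  thus ?thesis using eq_iff_diff0 e f by simp
qed

lemma (in ring) comm_idem_J:
  assumes e: "e \<in> carrier R" "e \<otimes> e = e" and f: "f \<in> carrier R" "f \<otimes> f = f"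
    and com: "e \<otimes> f = f \<otimes> e" and d: "e \<ominus> f \<in> jacobson R"
  shows "e = f"
proof -
  have "f \<ominus> e = \<ominus> (e \<ominus> f)" using e f by (simp add: minus_eq minus_add minus_minus a_comm)
  hence d': "f \<ominus> e \<in> jacobson R" using jac_neg d by simp
  have "e = e \<otimes> f" using comm_idem_J_aux[OF e f com d] .
  moreover have "f = f \<otimes> e" using comm_idem_J_aux[OF f e com[symmetric] d'] .
  ultimately show ?thesis using com by simp
qed



context ideal
begin

lemma q_carrier: "X \<in> carrier (R Quot I) \<longleftrightarrow> (\<exists>a\<in>carrier R. X = I +> a)"
  by (simp add: FactRing_def A_RCOSETS_def')

lemma q_in: "a \<in> carrier R \<Longrightarrow> I +> a \<in> carrier (R Quot I)"
  using q_carrier by blast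

lemma q_eq:
  assumes "a \<in> carrier R" "b \<in> carrier R"
  shows "(I +> a = I +> b) \<longleftrightarrow> a \<ominus> b \<in> I"
proof
  assume "I +> a = I +> b"
  hence "a \<in> I +> b" using a_rcos_self assms by metis
  thus "a \<ominus> b \<in> I" using a_rcos_module_minus[OF ring_axioms assms(2,1)] by simp
next
  assume "a \<ominus> b \<in> I"
  hence "a \<in> I +> b" using a_rcos_module_minus[OF ring_axioms assms(2,1)] by simp
  thus "I +> a = I +> b" using a_repr_independence' assms by metis
qed

lemma q_hom: "ring_hom_ring R (R Quot I) ((+>) I)"
  by (rule rcos_ring_hom_ring)

lemma q_add: "a \<in> carrier R \<Longrightarrow> b \<in> carrier R \<Longrightarrow>
    (I +> a) \<oplus>\<^bsub>R Quot I\<^esub> (I +> b) = I +> (a \<oplus> b)"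
proof -
  assume "a \<in> carrier R" "b \<in> carrier R"
  interpret H: ring_hom_ring R "R Quot I" "(+>) I" by (rule q_hom)
  show ?thesis using \<open>a \<in> carrier R\<close> \<open>b \<in> carrier R\<close> by simp
qed

lemma q_mul: "a \<in> carrier R \<Longrightarrow> b \<in> carrier R \<Longrightarrow>
    (I +> a) \<otimes>\<^bsub>R Quot I\<^esub> (I +> b) = I +> (a \<otimes> b)"
proof -
  assume "a \<in> carrier R" "b \<in> carrier R"
  interpret H: ring_hom_ring R "R Quot I" "(+>) I" by (rule q_hom)
  show ?thesis using \<open>a \<in> carrier R\<close> \<open>b \<in> carrier R\<close> by simp
qed

lemma q_one: "\<one>\<^bsub>R Quot I\<^esub> = I +> \<one>"
  by (simp add: FactRing_def)

lemma q_minus: "a \<in> carrier R \<Longrightarrow> b \<in> carrier R \<Longrightarrow>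
    (I +> a) \<ominus>\<^bsub>R Quot I\<^esub> (I +> b) = I +> (a \<ominus> b)"
proof -
  assume "a \<in> carrier R" "b \<in> carrier R"
  interpret H: ring_hom_ring R "R Quot I" "(+>) I" by (rule q_hom)
  show ?thesis using \<open>a \<in> carrier R\<close> \<open>b \<in> carrier R\<close>
    by (simp add: minus_eq H.S.minus_eq)
qed

lemma q_ring: "ring (R Quot I)" by (rule quotient_is_ring)

end

locale ctx = ideal I R for I and R (structure) +
  fixes sigma
  assumes sc: "a \<in> carrier R \<Longrightarrow> sigma a \<in> carrier R"
    and sadd: "a \<in> carrier R \<Longrightarrow> b \<in> carrier R \<Longrightarrow> sigma (a \<oplus> b) = sigma a \<oplus> sigma b"
    and smul: "a \<in> carrier R \<Longrightarrow> b \<in> carrier R \<Longrightarrow> sigma (a \<otimes> b) = sigma b \<otimes> sigma a"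
    and sinv: "a \<in> carrier R \<Longrightarrow> sigma (sigma a) = a"
    and sI: "a \<in> I \<Longrightarrow> sigma a \<in> I"
    and IJ: "I \<subseteq> jacobson R"
begin

lemma s_zero: "sigma \<zero> = \<zero>"
proof -
  have "sigma \<zero> \<oplus> sigma \<zero> = sigma \<zero> \<oplus> \<zero>" using sadd[of \<zero> \<zero>] sc[of \<zero>] by simp
  thus ?thesis using sc[of \<zero>] by (metis add.l_cancel_one' add.m_closed zero_closed r_zero)
qed

lemma s_neg: "a \<in> carrier R \<Longrightarrow> sigma (\<ominus> a) = \<ominus> sigma a"
proof -
  assume a: "a \<in> carrier R"
  have "sigma (\<ominus> a) \<oplus> sigma a = \<zero>" using sadd[of "\<ominus> a" a] a s_zero by (simp add: l_neg)
  thus ?thesis using a sc by (metis minus_equality a_inv_closed)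
qed

lemma s_minus: "a \<in> carrier R \<Longrightarrow> b \<in> carrier R \<Longrightarrow> sigma (a \<ominus> b) = sigma a \<ominus> sigma b"
  by (simp add: minus_eq sadd s_neg)

lemma s_one: "sigma \<one> = \<one>"
proof -
  have "sigma \<one> \<otimes> \<one> = \<one>"
  proof -
    have "sigma (sigma \<one> \<otimes> \<one>) = sigma \<one> \<otimes> sigma (sigma \<one>)" using smul[of "sigma \<one>" \<one>] sc[of \<one>] by simp
    hence "sigma (sigma \<one>) = sigma \<one> \<otimes> \<one>" using sc sinv by simp
    thus ?thesis using sinv by simp
  qed
  thus ?thesis using sc by simp
qed

lemma quot_star_eq: "a \<in> carrier R \<Longrightarrow> quot_star R I sigma (I +> a) = I +> sigma a"
proof -
  assume a: "a \<in> carrier R"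
  have "a \<in> I +> a" using a_rcos_self a by blast
  hence x: "(SOME x. x \<in> I +> a) \<in> I +> a" by (rule someI)
  define x where "x = (SOME x. x \<in> I +> a)"
  have xc: "x \<in> carrier R" using x a x_def a_r_coset_subset_G a_subset by blast
  have "x \<ominus> a \<in> I" using x a_rcos_module_minus[OF ring_axioms a xc] x_def by simp
  hence "sigma (x \<ominus> a) \<in> I" by (rule sI)
  hence "sigma x \<ominus> sigma a \<in> I" using s_minus xc a by simp
  hence "I +> sigma x = I +> sigma a" using q_eq sc xc a by blast
  thus ?thesis unfolding quot_star_def x_def[symmetric] .
qed

end



lemma (in ring) cancel_l:
  assumes "a \<in> carrier R" "b \<in> carrier R" "c \<in> carrier R"
  shows "(a \<oplus> b) \<ominus> (a \<oplus> c) = b \<ominus> c"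
proof -
  have "(b \<ominus> c) \<oplus> (a \<oplus> c) = a \<oplus> ((b \<ominus> c) \<oplus> c)" using assms by (simp add: a_ac)
  also have "(b \<ominus> c) \<oplus> c = b" using assms by (simp add: minus_eq a_assoc l_neg)
  finally show ?thesis using diff_eq_iff assms by simp
qed

context ctx
begin

lemma sjc_decomp:
  assumes "strongly_J_star_clean R sigma" "a \<in> carrier R"
  obtains e u where "e \<in> carrier R" "e \<otimes> e = e" "sigma e = e" "u \<in> jacobson R"
    "a = e \<oplus> u" "a \<otimes> e = e \<otimes> a"
  using assms unfolding strongly_J_star_clean_def projection_def by blast

lemma idem_proj:
  assumes sjc: "strongly_J_star_clean R sigma" and e: "e \<in> carrier R" "e \<otimes> e = e"
  shows "sigma e = e"
proof -
  obtain p u where p: "p \<in> carrier R" "p \<otimes> p = p" "sigma p = p" "u \<in> jacobson R"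
    "e = p \<oplus> u" "e \<otimes> p = p \<otimes> e" using sjc_decomp[OF sjc e(1)] by blast
  have uc: "u \<in> carrier R" using p jac_sub by blast
  have "e \<ominus> p = u" using diff_eq_iff e p uc by (simp add: a_comm)
  hence "e = p" using comm_idem_J[OF e p(1,2) p(6)] p by simp
  thus ?thesis using p by simp
qed

lemma fwd_abelian:
  assumes sjc: "strongly_J_star_clean R sigma"
  shows "abelian_ring R"
  unfolding abelian_ring_def
proof (intro ballI impI)
  fix e x assume e: "e \<in> carrier R" and ee: "e \<otimes> e = e" and x: "x \<in> carrier R"
  have se: "sigma e = e" using idem_proj sjc e ee by blast
  have "(\<one> \<ominus> e) \<otimes> e = e \<ominus> e" using e ee by (simp add: l_distr_minus)
  hence oe: "(\<one> \<ominus> e) \<otimes> e = \<zero>" using e by (simp add: minus_eq r_neg)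
  have "e \<otimes> (\<one> \<ominus> e) = e \<ominus> e" using e ee by (simp add: r_distr_minus)
  hence eo: "e \<otimes> (\<one> \<ominus> e) = \<zero>" using e by (simp add: minus_eq r_neg)
  have soe: "sigma (\<one> \<ominus> e) = \<one> \<ominus> e" using s_minus s_one se e by simp
  have A: "e \<otimes> y \<otimes> (\<one> \<ominus> e) = \<zero>" if y: "y \<in> carrier R" for y
  proof -
    define z where "z = e \<otimes> y \<otimes> (\<one> \<ominus> e)"
    have zc: "z \<in> carrier R" unfolding z_def using e y by simp
    have ez: "e \<otimes> z = z" unfolding z_def using e y ee by (simp add: m_assoc[symmetric])
    have ze: "z \<otimes> e = \<zero>" unfolding z_def using e y oe by (simp add: m_assoc)
    have zz: "z \<otimes> z = \<zero>"
    proof -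
      have "z \<otimes> z = (z \<otimes> e) \<otimes> (y \<otimes> (\<one> \<ominus> e))" unfolding z_def using e y by (simp add: m_assoc)
      thus ?thesis using ze e y by simp
    qed
    define h where "h = e \<oplus> z"
    have hc: "h \<in> carrier R" unfolding h_def using e zc by simp
    have "h \<otimes> h = e \<otimes> e \<oplus> e \<otimes> z \<oplus> (z \<otimes> e \<oplus> z \<otimes> z)" unfolding h_def using e zc
      by (simp add: l_distr r_distr a_assoc a_lcomm)
    hence hh: "h \<otimes> h = h" unfolding h_def using ee ez ze zz e zc by simp
    have sh: "sigma h = h" using idem_proj[OF sjc hc hh] .
    have "sigma h = e \<oplus> (\<one> \<ominus> e) \<otimes> (sigma y \<otimes> e)" unfolding h_def z_def
      using e y se soe sc smul sadd by simp
    hence "e \<otimes> sigma h = e \<oplus> (e \<otimes> (\<one> \<ominus> e)) \<otimes> (sigma y \<otimes> e)" using e y sc ee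
      by (simp add: r_distr m_assoc)
    hence "e \<otimes> sigma h = e" using eo e y sc by simp
    moreover have "e \<otimes> h = h" unfolding h_def using e zc ee ez by (simp add: r_distr)
    ultimately have "h = e" using sh by simp
    hence "e \<oplus> z = e \<oplus> \<zero>" unfolding h_def using e by simp
    thus ?thesis using z_def e zc by (metis add.l_cancel_one r_zero)
  qed
  have "e \<otimes> x \<otimes> (\<one> \<ominus> e) = \<zero>" using A x by blast
  hence "e \<otimes> x \<ominus> e \<otimes> x \<otimes> e = \<zero>" using e x by (simp add: r_distr_minus)
  hence ex: "e \<otimes> x = e \<otimes> x \<otimes> e" using eq_iff_diff0 e x by simp
  have "e \<otimes> sigma x \<otimes> (\<one> \<ominus> e) = \<zero>" using A x sc by blast
  hence "sigma (e \<otimes> sigma x \<otimes> (\<one> \<ominus> e)) = \<zero>" using s_zero by simp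
  hence "(\<one> \<ominus> e) \<otimes> (x \<otimes> e) = \<zero>" using e x sc smul soe sinv se by simp
  hence "x \<otimes> e \<ominus> e \<otimes> x \<otimes> e = \<zero>" using e x by (simp add: l_distr_minus m_assoc)
  hence "x \<otimes> e = e \<otimes> x \<otimes> e" using eq_iff_diff0 e x by simp
  thus "e \<otimes> x = x \<otimes> e" using ex by simp
qed

end


context ctx
begin

lemma fwd_lift:
  assumes sjc: "strongly_J_star_clean R sigma"
  shows "idempotents_lift R I"
  unfolding idempotents_lift_def
proof (intro ballI impI)
  fix x assume x: "x \<in> carrier R" and xI: "x \<ominus> x \<otimes> x \<in> I"
  obtain e u where e: "e \<in> carrier R" "e \<otimes> e = e" "sigma e = e" and uJ: "u \<in> jacobson R"
    and xeu: "x = e \<oplus> u" and com: "x \<otimes> e = e \<otimes> x" using sjc_decomp[OF sjc x] by blast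
  have uc: "u \<in> carrier R" using uJ jac_sub by blast
  have "e \<otimes> e \<oplus> u \<otimes> e = e \<otimes> e \<oplus> e \<otimes> u" using com xeu e uc by (simp add: l_distr r_distr)
  hence ue: "u \<otimes> e = e \<otimes> u" using e(1) uc by simp
  have xu: "x \<ominus> e = u" using diff_eq_iff x e uc xeu by (simp add: a_comm)
  define s where "s = u \<otimes> e"
  define t where "t = u \<otimes> u"
  have sc': "s \<in> carrier R" "t \<in> carrier R" unfolding s_def t_def using e uc by auto
  have "x \<otimes> x = e \<otimes> (e \<oplus> u) \<oplus> u \<otimes> (e \<oplus> u)" using xeu e uc by (simp add: l_distr)
  also have "\<dots> = e \<oplus> (s \<oplus> (s \<oplus> t))" unfolding s_def t_def using e uc ue
    by (simp add: r_distr a_assoc)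
  finally have xx: "x \<otimes> x = e \<oplus> (s \<oplus> (s \<oplus> t))" .
  define q where "q = \<one> \<ominus> e \<ominus> e"
  have qc: "q \<in> carrier R" unfolding q_def using e by simp
  have "q \<otimes> e = (e \<ominus> e) \<ominus> e" unfolding q_def using e
    by (simp add: l_distr_minus)
  hence qe: "q \<otimes> e = \<ominus> e" using e by (simp add: minus_eq r_neg)
  have qq: "q \<otimes> q = \<one>"
  proof -
    have "q \<otimes> q = q \<ominus> q \<otimes> e \<ominus> q \<otimes> e" unfolding q_def using e
      by (simp only: r_distr_minus r_one minus_closed one_closed m_closed)
    also have "\<dots> = \<one>" unfolding qe unfolding q_def using e
      by (simp add: minus_eq minus_minus a_assoc r_neg1 l_neg)
    finally show ?thesis .
  qed
  define c where "c = q \<ominus> u"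
  have "u \<otimes> c = u \<ominus> s \<ominus> s \<ominus> t" unfolding c_def q_def s_def t_def using e uc
    by (simp add: r_distr_minus)
  also have "\<dots> = u \<ominus> (s \<oplus> (s \<oplus> t))" using uc sc' by (simp add: minus_eq minus_add a_assoc)
  also have "\<dots> = (e \<oplus> u) \<ominus> (e \<oplus> (s \<oplus> (s \<oplus> t)))" using cancel_l e uc sc' by simp
  also have "\<dots> = x \<ominus> x \<otimes> x" using xx xeu by metis
  finally have ucI: "u \<otimes> c \<in> I" using xI by simp
  have quJ: "q \<otimes> u \<in> jacobson R" using jac_lmult qc uJ by blast
  obtain w where w: "w \<in> carrier R" "(\<one> \<ominus> q \<otimes> u) \<otimes> w = \<one>" using unit_of_J[OF quJ] by blast
  have cq: "c = q \<otimes> (\<one> \<ominus> q \<otimes> u)" unfolding c_def using qc uc qq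
    by (simp add: r_distr_minus m_assoc[symmetric])
  have "c \<otimes> (w \<otimes> q) = q \<otimes> ((\<one> \<ominus> q \<otimes> u) \<otimes> w) \<otimes> q" unfolding cq using qc uc w(1)
    by (simp add: m_assoc)
  hence cinv: "c \<otimes> (w \<otimes> q) = \<one>" using w qq qc by simp
  have cc: "c \<in> carrier R" unfolding c_def using qc uc by simp
  have "u = (u \<otimes> c) \<otimes> (w \<otimes> q)" using cinv uc cc w qc by (simp add: m_assoc)
  moreover have "(u \<otimes> c) \<otimes> (w \<otimes> q) \<in> I" using I_r_closed[OF ucI] w(1) qc by simp
  ultimately have "u \<in> I" by simp
  thus "\<exists>f\<in>carrier R. f \<otimes> f = f \<and> x \<ominus> f \<in> I" using e xu by blast
qed

end


context ctx
begin

lemma fwd_quot: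
  assumes sjc: "strongly_J_star_clean R sigma"
  shows "strongly_J_star_clean (R Quot I) (quot_star R I sigma)"
  unfolding strongly_J_star_clean_def
proof
  interpret Q: ring "R Quot I" by (rule q_ring)
  fix X assume "X \<in> carrier (R Quot I)"
  then obtain a where a: "a \<in> carrier R" and X: "X = I +> a" using q_carrier by blast
  obtain e u where e: "e \<in> carrier R" "e \<otimes> e = e" "sigma e = e" and uJ: "u \<in> jacobson R"
    and xeu: "a = e \<oplus> u" and com: "a \<otimes> e = e \<otimes> a" using sjc_decomp[OF sjc a] by blast
  have uc: "u \<in> carrier R" using uJ jac_sub by blast
  have proj: "projection (R Quot I) (quot_star R I sigma) (I +> e)"
    unfolding projection_def using q_in q_mul quot_star_eq e by simp
  have "I +> u \<in> jacobson (R Quot I)"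
  proof (rule Q.J_of_left_inv)
    show "I +> u \<in> carrier (R Quot I)" using q_in uc by blast
    fix Y assume "Y \<in> carrier (R Quot I)"
    then obtain r where r: "r \<in> carrier R" and Y: "Y = I +> r" using q_carrier by blast
    obtain w where w: "w \<in> carrier R" "w \<otimes> (\<one> \<ominus> r \<otimes> u) = \<one>" using left_inv_of_J[OF uJ r] by blast
    have "(I +> w) \<otimes>\<^bsub>R Quot I\<^esub> (\<one>\<^bsub>R Quot I\<^esub> \<ominus>\<^bsub>R Quot I\<^esub> Y \<otimes>\<^bsub>R Quot I\<^esub> (I +> u))
        = I +> (w \<otimes> (\<one> \<ominus> r \<otimes> u))"
      unfolding Y q_one using r uc w by (simp add: q_mul q_minus)
    also have "\<dots> = \<one>\<^bsub>R Quot I\<^esub>" using w q_one by simp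
    finally show "\<exists>W\<in>carrier (R Quot I). W \<otimes>\<^bsub>R Quot I\<^esub> (\<one>\<^bsub>R Quot I\<^esub> \<ominus>\<^bsub>R Quot I\<^esub> Y \<otimes>\<^bsub>R Quot I\<^esub> (I +> u))
        = \<one>\<^bsub>R Quot I\<^esub>" using q_in w by blast
  qed
  moreover have "X = (I +> e) \<oplus>\<^bsub>R Quot I\<^esub> (I +> u)" using X xeu q_add e uc by simp
  moreover have "X \<otimes>\<^bsub>R Quot I\<^esub> (I +> e) = (I +> e) \<otimes>\<^bsub>R Quot I\<^esub> X" using X q_mul a e com by simp
  ultimately show "\<exists>E U. projection (R Quot I) (quot_star R I sigma) E \<and> U \<in> jacobson (R Quot I) \<and>
      X = E \<oplus>\<^bsub>R Quot I\<^esub> U \<and> X \<otimes>\<^bsub>R Quot I\<^esub> E = E \<otimes>\<^bsub>R Quot I\<^esub> X" using proj by blast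
qed

lemma bwd:
  assumes qs: "strongly_J_star_clean (R Quot I) (quot_star R I sigma)"
    and ab: "abelian_ring R" and lift: "idempotents_lift R I"
  shows "strongly_J_star_clean R sigma"
  unfolding strongly_J_star_clean_def
proof
  interpret Q: ring "R Quot I" by (rule q_ring)
  fix a assume a: "a \<in> carrier R"
  obtain E U where E: "projection (R Quot I) (quot_star R I sigma) E" and UJ: "U \<in> jacobson (R Quot I)"
    and XEU: "I +> a = E \<oplus>\<^bsub>R Quot I\<^esub> U"
    using qs q_in[OF a] unfolding strongly_J_star_clean_def by blast
  have Ec: "E \<in> carrier (R Quot I)" using E unfolding projection_def by blast
  then obtain e0 where e0: "e0 \<in> carrier R" "E = I +> e0" using q_carrier by blast
  have "I +> (e0 \<otimes> e0) = I +> e0" using E e0 q_mul unfolding projection_def by simp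
  hence "e0 \<ominus> e0 \<otimes> e0 \<in> I" using q_eq e0 by (metis m_closed)
  then obtain f where f: "f \<in> carrier R" "f \<otimes> f = f" "e0 \<ominus> f \<in> I"
    using lift e0 unfolding idempotents_lift_def by blast
  have Ef: "E = I +> f" using q_eq e0 f by simp
  have "quot_star R I sigma E = E" using E unfolding projection_def by blast
  hence "I +> sigma f = I +> f" using Ef quot_star_eq f by simp
  hence sfJ: "sigma f \<ominus> f \<in> jacobson R" using q_eq f sc IJ by blast
  have sfc: "sigma f \<in> carrier R" using sc f by blast
  have sff: "sigma f \<otimes> sigma f = sigma f" using smul[of f f] f by simp
  have "sigma f \<otimes> f = f \<otimes> sigma f" using ab sff sfc f unfolding abelian_ring_def by blast
  hence sf: "sigma f = f" using comm_idem_J[OF sfc sff f(1,2) _ sfJ] by blast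
  define u where "u = a \<ominus> f"
  have uc: "u \<in> carrier R" unfolding u_def using a f by simp
  have Uc: "U \<in> carrier (R Quot I)" using UJ Q.jac_sub by blast
  have "(I +> a) \<ominus>\<^bsub>R Quot I\<^esub> E = U" using Q.diff_eq_iff q_in[OF a] Ec Uc XEU
    by (simp add: Q.a_comm)
  hence Uu: "U = I +> u" unfolding u_def Ef using q_minus a f by simp
  have "u \<in> jacobson R"
  proof (rule J_of_left_inv[OF uc])
    fix r assume r: "r \<in> carrier R"
    obtain W where W: "W \<in> carrier (R Quot I)"
      "W \<otimes>\<^bsub>R Quot I\<^esub> (\<one>\<^bsub>R Quot I\<^esub> \<ominus>\<^bsub>R Quot I\<^esub> (I +> r) \<otimes>\<^bsub>R Quot I\<^esub> U) = \<one>\<^bsub>R Quot I\<^esub>"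
      using Q.left_inv_of_J[OF UJ q_in[OF r]] by blast
    obtain w0 where w0: "w0 \<in> carrier R" "W = I +> w0" using W(1) q_carrier by blast
    define y where "y = w0 \<otimes> (\<one> \<ominus> r \<otimes> u)"
    have yc: "y \<in> carrier R" unfolding y_def using w0 r uc by simp
    have "I +> y = I +> \<one>" using W(2) unfolding y_def w0(2) Uu q_one using r uc w0
      by (simp add: q_mul q_minus)
    hence "y \<ominus> \<one> \<in> I" using q_eq yc by simp
    hence iJ: "\<ominus> (y \<ominus> \<one>) \<in> jacobson R" using IJ jac_neg by blast
    have "\<one> \<ominus> \<ominus> (y \<ominus> \<one>) = y" using yc
      by (simp add: minus_eq minus_minus minus_add a_ac r_neg1 r_neg2 l_neg r_neg)
    then obtain v where v: "v \<in> carrier R" "v \<otimes> y = \<one>" using unit_of_J[OF iJ] by auto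
    hence "(v \<otimes> w0) \<otimes> (\<one> \<ominus> r \<otimes> u) = \<one>" unfolding y_def using w0 r uc by (simp add: m_assoc)
    thus "\<exists>w\<in>carrier R. w \<otimes> (\<one> \<ominus> r \<otimes> u) = \<one>" using v w0 by blast
  qed
  moreover have "projection R sigma f" unfolding projection_def using f sf by blast
  moreover have "a = f \<oplus> u" unfolding u_def using a f by (simp add: minus_eq a_lcomm r_neg a_comm)
  moreover have "a \<otimes> f = f \<otimes> a" using ab f a unfolding abelian_ring_def by metis
  ultimately show "\<exists>e u. projection R sigma e \<and> u \<in> jacobson R \<and> a = e \<oplus> u \<and> a \<otimes> e = e \<otimes> a" by blast
qed

end

theorem theorem3p7:
  fixes R :: "('a, 'b) ring_scheme" and sigma :: "'a \<Rightarrow> 'a" and I :: "'a set"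
  assumes "star_ring R sigma"
    and "ideal I R"
    and "sigma ` I \<subseteq> I"
    and "I \<subseteq> jacobson R"
  shows "strongly_J_star_clean R sigma \<longleftrightarrow>
           strongly_J_star_clean (R Quot I) (quot_star R I sigma) \<and>
           abelian_ring R \<and> idempotents_lift R I"
proof -
  interpret ctx I R sigma
  proof (rule ctx.intro[OF assms(2)], unfold_locales)
    show "\<And>a. a \<in> carrier R \<Longrightarrow> sigma a \<in> carrier R" using assms(1) unfolding star_ring_def by blast
    show "\<And>a b. a \<in> carrier R \<Longrightarrow> b \<in> carrier R \<Longrightarrow> sigma (a \<oplus>\<^bsub>R\<^esub> b) = sigma a \<oplus>\<^bsub>R\<^esub> sigma b"
      using assms(1) unfolding star_ring_def by blast
    show "\<And>a b. a \<in> carrier R \<Longrightarrow> b \<in> carrier R \<Longrightarrow> sigma (a \<otimes>\<^bsub>R\<^esub> b) = sigma b \<otimes>\<^bsub>R\<^esub> sigma a"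
      using assms(1) unfolding star_ring_def by blast
    show "\<And>a. a \<in> carrier R \<Longrightarrow> sigma (sigma a) = a" using assms(1) unfolding star_ring_def by blast
    show "\<And>a. a \<in> I \<Longrightarrow> sigma a \<in> I" using assms(3) by blast
    show "I \<subseteq> jacobson R" by (rule assms(4))
  qed
  show ?thesis using fwd_quot fwd_abelian fwd_lift bwd by blast
qed

end
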